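(* Let $n\ge1$, $1\le p\le q<\infty$, $\alpha\in\mathbb{R}$ with $\alpha\le0$ if $p=q$, and let $Q_0\subset\mathbb{R}^n$ be a cube and $f\in L^1(Q_0)$. Then there exists a family $(Q_i)_{i\in I}\in S(Q_0)$ (depending on $f,p,q,\alpha$) such that for almost every $x\in Q_0$, $$M_{n(\frac1p-\frac1q),\alpha,Q_0}f(x)\le 2\max\Big\{1,e^{\frac1p-\frac1q-\alpha}\Big(\frac{pq\alpha}{q-p}\Big)^\alpha\Big\}\sum_{i\in I}\bigg(\frac{(1-(\log|Q_i|)_-)^\alpha}{|Q_i|^{\frac1{p'}+\frac1q}}\int_{Q_i}|f(y)|\,dy\bigg)\mathbf 1_{Q_i}(x),$$ where the maximum is interpreted as $1$ when $p=q$ or $\alpha<0$.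
   Context: Cubes have sides parallel to axes; $\mathcal{D}(Q_0)$ is the family of dyadic subcubes of $Q_0$. A countable $(Q_i)_{i\in I}\subset\mathcal{D}(Q_0)$ is sparse if there exist pairwise disjoint measurable $E_{Q_i}\subseteq Q_i$ with $|E_{Q_i}|\ge\frac12|Q_i|$; $S(Q_0)$ is the set of sparse families. $(a)_-=\min\{a,0\}$, natural logarithm, $p'$ the dual exponent. For $0\le\lambda<n$, $M_{\lambda,\alpha,Q_0}f(x)=\sup_{Q\in\mathcal{D}(Q_0),\,x\in Q}|Q|^{\frac\lambda n-1}(1-(\log|Q|)_-)^\alpha\int_Q|f|$. *)

theory Defs
  imports "HOL-Analysis.Analysis"
begin

definition cube :: "real^'n \<Rightarrow> real \<Rightarrow> (real^'n) set" where
  "cube a l = cbox a (a + l *\<^sub>R One)"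

definition dyadic_cubes :: "real^'n \<Rightarrow> real \<Rightarrow> (real^'n) set set" where
  "dyadic_cubes a l =
     {cube (a + (l / 2 ^ k) *\<^sub>R (\<chi> i. real (j i))) (l / 2 ^ k) | k j.
        \<forall>i. j i < (2::nat) ^ k}"

definition sparse :: "real^'n \<Rightarrow> real \<Rightarrow> (real^'n) set set \<Rightarrow> bool" where
  "sparse a l S \<longleftrightarrow> countable S \<and> S \<subseteq> dyadic_cubes a l \<and>
     (\<exists>E. (\<forall>Q\<in>S. E Q \<in> sets lebesgue \<and> E Q \<subseteq> Q \<and>
              measure lebesgue (E Q) \<ge> measure lebesgue Q / 2) \<and>
          disjoint_family_on E S)"

text \<open>(t)_- = min t 0\<close>
definition negpart :: "real \<Rightarrow> real" where
  "negpart t = min t 0"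

definition max_op :: "real \<Rightarrow> real \<Rightarrow> real^'n \<Rightarrow> real \<Rightarrow> (real^'n \<Rightarrow> real) \<Rightarrow> real^'n \<Rightarrow> ennreal" where
  "max_op lam \<alpha> a l f x =
     (SUP Q \<in> {Q \<in> dyadic_cubes a l. x \<in> Q}.
        ennreal (measure lebesgue Q powr (lam / real CARD('n) - 1)
                 * (1 - negpart (ln (measure lebesgue Q))) powr \<alpha>
                 * (LINT y:Q|lebesgue. \<bar>f y\<bar>)))"

text \<open>The constant 2 max{1, e^(1/p-1/q-alpha) (pq alpha/(q-p))^alpha}, with the
  maximum read as 1 if p = q or alpha < 0, and the convention 0^0 = 1.\<close>
definition sparse_const :: "real \<Rightarrow> real \<Rightarrow> real \<Rightarrow> real" where
  "sparse_const p q \<alpha> =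
     2 * (if p = q \<or> \<alpha> < 0 then 1
          else max 1 (exp (1/p - 1/q - \<alpha>) *
                 (if \<alpha> = 0 then 1 else (p * q * \<alpha> / (q - p)) powr \<alpha>)))"

end

theory Submission
  imports Defs
begin

fun ptop :: "(nat \<Rightarrow> ('n \<Rightarrow> nat) \<Rightarrow> real) \<Rightarrow> nat \<Rightarrow> ('n \<Rightarrow> nat) \<Rightarrow> nat \<times> ('n \<Rightarrow> nat)" where
  "ptop av 0 j = (0, j)"
| "ptop av (Suc k) j = (let P = ptop av k (\<lambda>i. j i div 2) in
      if av (Suc k) j > 2 * av (fst P) (snd P) then (Suc k, j) else P)"

lemma ptop_anc: "fst (ptop av k j) \<le> k \<and> snd (ptop av k j) = (\<lambda>i. j i div 2 ^ (k - fst (ptop av k j)))"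
proof (induction k arbitrary: j)
  case 0 then show ?case by simp
next
  case (Suc k)
  show ?case
  proof (cases "av (Suc k) j > 2 * av (fst (ptop av k (\<lambda>i. j i div 2))) (snd (ptop av k (\<lambda>i. j i div 2)))")
    case True then show ?thesis by (simp add: Let_def)
  next
    case False
    have e: "ptop av (Suc k) j = ptop av k (\<lambda>i. j i div 2)" using False by (simp add: Let_def)
    have h: "fst (ptop av k (\<lambda>i. j i div 2)) \<le> k" using Suc.IH by blast
    have "Suc k - fst (ptop av k (\<lambda>i. j i div 2)) = Suc (k - fst (ptop av k (\<lambda>i. j i div 2)))" using h by simp
    then show ?thesis unfolding e using Suc.IH[of "\<lambda>i. j i div 2"] h
      by (auto simp: div_mult2_eq mult.commute)
  qed
qed

lemma ptop_idem: "ptop av (fst (ptop av k j)) (snd (ptop av k j)) = ptop av k j"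
proof (induction k arbitrary: j)
  case 0 then show ?case by simp
next
  case (Suc k)
  show ?case
  proof (cases "av (Suc k) j > 2 * av (fst (ptop av k (\<lambda>i. j i div 2))) (snd (ptop av k (\<lambda>i. j i div 2)))")
    case True then show ?thesis by (simp add: Let_def)
  next
    case False
    have e: "ptop av (Suc k) j = ptop av k (\<lambda>i. j i div 2)" using False by (simp add: Let_def)
    show ?thesis unfolding e by (rule Suc.IH)
  qed
qed

lemma ptop_avg:
  assumes "\<And>k j. av k j \<ge> 0"
  shows "av k j \<le> 2 * av (fst (ptop av k j)) (snd (ptop av k j))"
proof (cases k)
  case 0 then show ?thesis using assms[of k j] by simp
next
  case (Suc m)
  then show ?thesis using assms[of k j] by (auto simp: Let_def)
qed

lemma ptop_step:
  assumes "ptop av (Suc k) j \<noteq> ptop av k (\<lambda>i. j i div 2)"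
  shows "ptop av (Suc k) j = (Suc k, j) \<and> av (Suc k) j > 2 * av (fst (ptop av k (\<lambda>i. j i div 2))) (snd (ptop av k (\<lambda>i. j i div 2)))"
  using assms by (auto simp: Let_def split: if_splits)

definition gam :: "real \<Rightarrow> real \<Rightarrow> real \<Rightarrow> real" where
  "gam \<beta> \<alpha> t = t powr \<beta> * (1 - negpart (ln t)) powr \<alpha>"

lemma ln_ge_1m: "x > 0 \<Longrightarrow> ln x \<ge> 1 - 1 / (x::real)"
proof -
  assume x: "x > 0"
  have "ln (1/x) \<le> 1/x - 1" using x by (intro ln_le_minus_one) auto
  then show ?thesis using x by (simp add: ln_div)
qed

lemma F_le:
  fixes \<alpha> \<beta> u :: real
  assumes "\<alpha> > 0" "\<beta> > 0" "u \<ge> 0"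
  shows "\<alpha> * ln (1 + u) - \<beta> * u \<le> \<alpha> * ln (\<alpha> / \<beta>) + \<beta> - \<alpha>"
proof -
  have "ln ((1+u) / (\<alpha>/\<beta>)) \<le> (1+u) / (\<alpha>/\<beta>) - 1"
    using assms by (intro ln_le_minus_one) auto
  moreover have "ln ((1+u) / (\<alpha>/\<beta>)) = ln (1+u) - ln (\<alpha>/\<beta>)"
    using assms by (simp add: ln_div ln_mult)
  moreover have "(1+u) / (\<alpha>/\<beta>) = (1+u) * \<beta> / \<alpha>" by simp
  ultimately have "ln (1+u) - ln (\<alpha>/\<beta>) \<le> (1+u) * \<beta> / \<alpha> - 1"
    by simp
  then have "\<alpha> * (ln (1+u) - ln (\<alpha>/\<beta>)) \<le> \<alpha> * ((1+u) * \<beta> / \<alpha> - 1)"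
    using assms by (intro mult_left_mono) auto
  moreover have "\<alpha> * ((1+u) * \<beta> / \<alpha> - 1) = (1+u) * \<beta> - \<alpha>" using assms by (simp add: field_simps)
  ultimately show ?thesis by (simp add: algebra_simps)
qed

lemma F_dec:
  fixes \<alpha> \<beta> u v :: real
  assumes "\<alpha> > 0" "\<beta> > 0" "0 \<le> u" "u \<le> v" "\<alpha> / (1+u) \<le> \<beta>"
  shows "\<alpha> * ln (1 + v) - \<beta> * v \<le> \<alpha> * ln (1 + u) - \<beta> * u"
proof -
  have "ln ((1+v) / (1+u)) \<le> (1+v) / (1+u) - 1"
    using assms by (intro ln_le_minus_one) auto
  then have "ln (1+v) - ln (1+u) \<le> (v - u) / (1+u)"
    using assms by (simp add: ln_div field_simps)
  then have "\<alpha> * (ln (1+v) - ln (1+u)) \<le> \<alpha> * ((v - u) / (1+u))"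
    using assms by (intro mult_left_mono) auto
  also have "\<dots> = (v - u) * (\<alpha> / (1+u))" by simp
  also have "\<dots> \<le> (v - u) * \<beta>" using assms by (intro mult_left_mono) auto
  finally show ?thesis by (simp add: algebra_simps)
qed

lemma F_pos:
  fixes \<alpha> \<beta> u :: real
  assumes "\<alpha> > 0" "\<beta> > 0" "0 \<le> u" "\<alpha> / (1+u) > \<beta>"
  shows "0 \<le> \<alpha> * ln (1 + u) - \<beta> * u"
proof -
  have "ln (1+u) \<ge> 1 - 1/(1+u)" using assms by (intro ln_ge_1m) auto
  then have "ln (1+u) \<ge> u / (1+u)" using assms by (simp add: field_simps)
  then have "\<alpha> * ln (1+u) \<ge> \<alpha> * (u / (1+u))" using assms by (intro mult_left_mono) auto
  also have "\<alpha> * (u / (1+u)) = u * (\<alpha> / (1+u))" by simp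
  also have "\<dots> \<ge> u * \<beta>" using assms by (intro mult_left_mono) auto
  finally show ?thesis by (simp add: algebra_simps)
qed

lemma gam_small:
  assumes "0 < t" "t < 1"
  shows "gam \<beta> \<alpha> t = exp (\<alpha> * ln (1 + (- ln t)) - \<beta> * (- ln t))"
proof -
  have l: "ln t < 0" using assms by simp
  have "negpart (ln t) = ln t" using l by (simp add: negpart_def)
  moreover have "1 - ln t > 0" using l by simp
  ultimately show ?thesis using assms
    by (simp add: gam_def powr_def exp_add[symmetric] algebra_simps)
qed

lemma gam_big:
  assumes "1 \<le> t"
  shows "gam \<beta> \<alpha> t = t powr \<beta>"
  using assms by (simp add: gam_def negpart_def)

lemma gam_nonneg: "0 < t \<Longrightarrow> 0 \<le> gam \<beta> \<alpha> t"
  by (simp add: gam_def)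

lemma sc_ge1: "sparse_const p q \<alpha> / 2 \<ge> 1"
  by (simp add: sparse_const_def)

lemma gam_ratio:
  fixes p q \<alpha> s t :: real
  assumes "1 \<le> p" "p \<le> q" "p = q \<Longrightarrow> \<alpha> \<le> 0" "0 < s" "s \<le> t"
  shows "gam (1/p - 1/q) \<alpha> s \<le> (sparse_const p q \<alpha> / 2) * gam (1/p - 1/q) \<alpha> t"
proof -
  define \<beta> where "\<beta> = 1/p - 1/q"
  have b0: "\<beta> \<ge> 0" using assms unfolding \<beta>_def by (simp add: frac_le)
  have t0: "0 < t" using assms by simp
  have K1: "sparse_const p q \<alpha> / 2 \<ge> 1" by (rule sc_ge1)
  show ?thesis
  proof (cases "\<alpha> \<le> 0")
    case True
    have a: "s powr \<beta> \<le> t powr \<beta>" using assms b0 by (intro powr_mono2) auto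
    have n1: "1 \<le> 1 - negpart (ln t)" by (simp add: negpart_def)
    have "ln s \<le> ln t" using assms by simp
    then have n2: "1 - negpart (ln t) \<le> 1 - negpart (ln s)"
      by (auto simp: negpart_def min_def)
    have b: "(1 - negpart (ln s)) powr \<alpha> \<le> (1 - negpart (ln t)) powr \<alpha>"
      using n1 n2 True by (intro powr_mono2') auto
    have "gam \<beta> \<alpha> s \<le> gam \<beta> \<alpha> t"
      unfolding gam_def by (intro mult_mono a b) auto
    also have "\<dots> \<le> (sparse_const p q \<alpha> / 2) * gam \<beta> \<alpha> t"
      using K1 gam_nonneg[OF t0] by (metis mult_le_cancel_right1 order.strict_implies_order
          linorder_not_le mult_le_cancel_right2 order_refl)
    finally show ?thesis unfolding \<beta>_def .
  next
    case False
    then have a0: "\<alpha> > 0" by simp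
    have pq: "p < q" using assms False by force
    have bpos: "\<beta> > 0" using assms pq unfolding \<beta>_def by (simp add: frac_less2)
    define M where "M = exp (\<beta> - \<alpha>) * (\<alpha> / \<beta>) powr \<alpha>"
    have abeq: "p * q * \<alpha> / (q - p) = \<alpha> / \<beta>"
      using assms pq unfolding \<beta>_def by (simp add: field_simps)
    have Keq: "sparse_const p q \<alpha> / 2 = max 1 M"
      using pq a0 abeq unfolding sparse_const_def M_def \<beta>_def by simp
    have Meq: "M = exp (\<alpha> * ln (\<alpha> / \<beta>) + \<beta> - \<alpha>)"
      using a0 bpos unfolding M_def by (simp add: powr_def exp_add[symmetric] algebra_simps)
    have FM: "exp (\<alpha> * ln (1 + u) - \<beta> * u) \<le> M" if "u \<ge> 0" for u
      unfolding Meq using F_le[OF a0 bpos that] by simp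
    have small_le: "gam \<beta> \<alpha> r \<le> max 1 M" if "0 < r" "r < 1" for r
    proof -
      have "gam \<beta> \<alpha> r \<le> M" unfolding gam_small[OF that] using that by (intro FM) simp
      then show ?thesis by simp
    qed
    show ?thesis
    proof (cases "t \<ge> 1")
      case True
      have gt: "gam \<beta> \<alpha> t = t powr \<beta>" using True by (rule gam_big)
      have gt1: "t powr \<beta> \<ge> 1" using True b0 by (simp add: ge_one_powr_ge_zero)
      show ?thesis
      proof (cases "s \<ge> 1")
        case True
        have "gam \<beta> \<alpha> s = s powr \<beta>" using True by (rule gam_big)
        also have "\<dots> \<le> t powr \<beta>" using assms b0 by (intro powr_mono2) auto
        also have "\<dots> \<le> (sparse_const p q \<alpha> / 2) * t powr \<beta>"
          using K1 gt1 mult_right_mono[of 1 "sparse_const p q \<alpha> / 2" "t powr \<beta>"] by simp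
        finally show ?thesis unfolding \<beta>_def[symmetric] gt .
      next
        case False
        have "gam \<beta> \<alpha> s \<le> max 1 M" using False assms by (intro small_le) auto
        also have "\<dots> \<le> max 1 M * t powr \<beta>"
          using gt1 by (simp add: mult_le_cancel_left1)
        finally show ?thesis unfolding \<beta>_def[symmetric] gt Keq .
      qed
    next
      case False
      define u where "u = - ln t"
      define v where "v = - ln s"
      have u0: "0 \<le> u" using False t0 unfolding u_def by simp
      have uv: "u \<le> v" using assms unfolding u_def v_def by simp
      have gs: "gam \<beta> \<alpha> s = exp (\<alpha> * ln (1 + v) - \<beta> * v)"
        unfolding v_def using assms False by (intro gam_small) auto
      have gtt: "gam \<beta> \<alpha> t = exp (\<alpha> * ln (1 + u) - \<beta> * u)"
        unfolding u_def using t0 False by (intro gam_small) auto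
      show ?thesis
      proof (cases "\<alpha> / (1+u) \<le> \<beta>")
        case True
        have "gam \<beta> \<alpha> s \<le> gam \<beta> \<alpha> t"
          unfolding gs gtt using F_dec[OF a0 bpos u0 uv True] by simp
        also have "\<dots> \<le> (sparse_const p q \<alpha> / 2) * gam \<beta> \<alpha> t"
          using K1 gam_nonneg[OF t0] mult_right_mono[of 1 "sparse_const p q \<alpha> / 2" "gam \<beta> \<alpha> t"] by simp
        finally show ?thesis unfolding \<beta>_def .
      next
        case False
        have g1: "gam \<beta> \<alpha> t \<ge> 1"
          unfolding gtt using F_pos[OF a0 bpos u0] False by simp
        have "gam \<beta> \<alpha> s \<le> M" unfolding gs using u0 uv by (intro FM) simp
        also have "\<dots> \<le> max 1 M" by simp
        also have "\<dots> \<le> max 1 M * gam \<beta> \<alpha> t" using g1 by (simp add: mult_le_cancel_left1)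
        finally show ?thesis unfolding \<beta>_def[symmetric] Keq .
      qed
    qed
  qed
qed

definition Cb :: "real^'n \<Rightarrow> real \<Rightarrow> nat \<Rightarrow> ('n \<Rightarrow> nat) \<Rightarrow> (real^'n) set" where
  "Cb a l k j = cube (a + (l / 2 ^ k) *\<^sub>R (\<chi> i. real (j i))) (l / 2 ^ k)"

definition fl :: "real^'n \<Rightarrow> real \<Rightarrow> nat \<Rightarrow> real^'n \<Rightarrow> 'n \<Rightarrow> int" where
  "fl a l k x i = \<lfloor>(x$i - a$i) * 2 ^ k / l\<rfloor>"

definition Hb :: "real^'n \<Rightarrow> real \<Rightarrow> nat \<Rightarrow> ('n \<Rightarrow> nat) \<Rightarrow> (real^'n) set" where
  "Hb a l k j = {x. \<forall>i. fl a l k x i = int (j i)}"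

definition ix :: "real^'n \<Rightarrow> real \<Rightarrow> nat \<Rightarrow> real^'n \<Rightarrow> ('n \<Rightarrow> nat)" where
  "ix a l k x = (\<lambda>i. nat (fl a l k x i))"

lemma One_nth: "(One :: real^'n) $ i = 1"
  by (simp add: cart_eq_inner_axis)

lemma mem_Cb: "x \<in> Cb a l k j \<longleftrightarrow>
   (\<forall>i. a$i + (l/2^k) * real (j i) \<le> x$i \<and> x$i \<le> a$i + (l/2^k) * real (j i) + l/2^k)"
  unfolding Cb_def cube_def mem_box_cart vector_add_component vector_scaleR_component One_nth vec_lambda_beta
  by (simp add: algebra_simps)

lemma mem_Hb:
  assumes "l > 0"
  shows "x \<in> Hb a l k j \<longleftrightarrow>
   (\<forall>i. a$i + (l/2^k) * real (j i) \<le> x$i \<and> x$i < a$i + (l/2^k) * real (j i) + l/2^k)"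
proof -
  have h: "l / 2^k > 0" using assms by simp
  have *: "fl a l k x i = int (j i) \<longleftrightarrow>
     a$i + (l/2^k) * real (j i) \<le> x$i \<and> x$i < a$i + (l/2^k) * real (j i) + l/2^k" for i
  proof -
    define t where "t = (x$i - a$i) * 2 ^ k / l"
    have xt: "x$i - a$i = (l/2^k) * t" unfolding t_def using assms by simp
    have "fl a l k x i = int (j i) \<longleftrightarrow> real (j i) \<le> t \<and> t < real (j i) + 1"
      unfolding fl_def t_def[symmetric] by (simp add: floor_eq_iff)
    also have "\<dots> \<longleftrightarrow> (l/2^k) * real (j i) \<le> (l/2^k) * t \<and> (l/2^k) * t < (l/2^k) * (real (j i) + 1)"
      using mult_le_cancel_left_pos[OF h] mult_less_cancel_left_pos[OF h] by presburger
    also have "\<dots> \<longleftrightarrow> a$i + (l/2^k) * real (j i) \<le> x$i \<and> x$i < a$i + (l/2^k) * real (j i) + l/2^k"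
      unfolding xt[symmetric] by (simp add: algebra_simps add_divide_distrib)
    finally show ?thesis .
  qed
  show ?thesis unfolding Hb_def using * by auto
qed

lemma Hb_sub_Cb: "l > 0 \<Longrightarrow> Hb a l k j \<subseteq> Cb a l k j"
  by (auto simp: mem_Hb mem_Cb less_imp_le)

lemma Cb_diff_Hb_null:
  fixes a :: "real^'n"
  assumes "l > 0"
  shows "Cb a l k j - Hb a l k j \<in> null_sets lebesgue"
proof -
  have sub: "Cb a l k j - Hb a l k j \<subseteq> (\<Union>i\<in>UNIV. {x::real^'n. x \<bullet> axis i 1 = a$i + (l/2^k) * real (j i) + l/2^k})"
  proof
    fix x assume x: "x \<in> Cb a l k j - Hb a l k j"
    then obtain i where "\<not> (x$i < a$i + (l/2^k) * real (j i) + l/2^k)"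
      using assms by (auto simp: mem_Hb mem_Cb)
    moreover have "x$i \<le> a$i + (l/2^k) * real (j i) + l/2^k" using x by (auto simp: mem_Cb)
    ultimately have "x$i = a$i + (l/2^k) * real (j i) + l/2^k" by simp
    then show "x \<in> (\<Union>i\<in>UNIV. {x::real^'n. x \<bullet> axis i 1 = a$i + (l/2^k) * real (j i) + l/2^k})"
      by (auto simp: cart_eq_inner_axis[symmetric])
  qed
  have "negligible (\<Union>i\<in>UNIV. {x::real^'n. x \<bullet> axis i 1 = a$i + (l/2^k) * real (j i) + l/2^k})"
    by (intro negligible_Union finite_imageI) (auto intro!: negligible_standard_hyperplane simp: axis_in_Basis_iff)
  then have "negligible (Cb a l k j - Hb a l k j)" using sub negligible_subset by blast
  then show ?thesis using negligible_iff_null_sets by blast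
qed

lemma Cb_sets[measurable]: "Cb a l k j \<in> sets lebesgue"
  unfolding Cb_def cube_def by simp

lemma Hb_sets[measurable]:
  assumes "l > 0" shows "Hb a l k j \<in> sets lebesgue"
proof -
  have "Hb a l k j = Cb a l k j - (Cb a l k j - Hb a l k j)" using Hb_sub_Cb[OF assms] by blast
  then show ?thesis using Cb_diff_Hb_null[OF assms] by (metis Cb_sets null_setsD2 sets.Diff)
qed

lemma Cb_measure:
  fixes a :: "real^'n"
  assumes "l > 0" shows "measure lebesgue (Cb a l k j) = (l / 2^k) ^ CARD('n)"
proof -
  define u where "u = a + (l / 2 ^ k) *\<^sub>R (\<chi> i. real (j i))"
  have h: "l / 2^k > 0" using assms by simp
  have ne: "cbox u (u + (l / 2 ^ k) *\<^sub>R One) \<noteq> {}"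
    unfolding interval_ne_empty_cart vector_add_component vector_scaleR_component One_nth using h by simp
  have "measure lebesgue (Cb a l k j) = measure lborel (cbox u (u + (l / 2 ^ k) *\<^sub>R One))"
    unfolding Cb_def cube_def u_def[symmetric] by simp
  also have "\<dots> = (\<Prod>i\<in>UNIV. (u + (l / 2 ^ k) *\<^sub>R One) $ i - u $ i)"
    using ne by (rule content_cbox_cart)
  also have "\<dots> = (l / 2^k) ^ CARD('n)"
    unfolding vector_add_component vector_scaleR_component One_nth by simp
  finally show ?thesis .
qed

lemma fl_div:
  assumes "m \<le> k" "l > 0"
  shows "fl a l m x i = fl a l k x i div 2 ^ (k - m)"
proof -
  have p: "(2::real) ^ k = 2 ^ m * 2 ^ (k - m)" using assms by (simp add: power_add[symmetric])
  have "(x$i - a$i) * 2 ^ m / l = ((x$i - a$i) * 2 ^ k / l) / real_of_int (2 ^ (k - m))"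
    unfolding p by simp
  then show ?thesis unfolding fl_def by (simp add: floor_divide_real_eq_div[symmetric])
qed

lemma Hb_anc:
  assumes "l > 0" "x \<in> Hb a l k j" "m \<le> k"
  shows "x \<in> Hb a l m (\<lambda>i. j i div 2 ^ (k - m))"
  using assms unfolding Hb_def by (auto simp: fl_div zdiv_int)

lemma Hb_unique: "x \<in> Hb a l k j \<Longrightarrow> x \<in> Hb a l k j' \<Longrightarrow> j = j'"
  unfolding Hb_def by auto

lemma ix_Hb: "x \<in> Hb a l k j \<Longrightarrow> ix a l k x = j"
  unfolding Hb_def ix_def by auto

lemma Hb_ix:
  assumes "l > 0" "x \<in> Hb a l g j0" "g \<le> k"
  shows "x \<in> Hb a l k (ix a l k x)"
proof -
  have "fl a l k x i \<ge> 0" for i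
  proof (rule ccontr)
    assume "\<not> fl a l k x i \<ge> 0"
    then have "fl a l k x i div 2 ^ (k - g) < 0" by (simp add: div_neg_pos_less0)
    then have "fl a l g x i < 0" using fl_div[OF assms(3,1), of a x i] by simp
    then show False using assms(2) unfolding Hb_def by auto
  qed
  then show ?thesis unfolding Hb_def ix_def by auto
qed

lemma Hb_bounded:
  assumes "l > 0" "x \<in> Hb a l k j" "x \<in> Hb a l 0 (\<lambda>_. 0)"
  shows "j i < 2 ^ k"
proof -
  have "x \<in> Hb a l 0 (\<lambda>i. j i div 2 ^ (k - 0))" using Hb_anc[OF assms(1,2)] by blast
  then have "(\<lambda>i. j i div 2 ^ k) = (\<lambda>_. 0)" using Hb_unique assms(3) by fastforce
  then have "j i div 2 ^ k = 0" by metis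
  then show ?thesis by (simp add: div_eq_0_iff)
qed

lemma Cb_anc:
  assumes "m \<le> k" "l > 0"
  shows "Cb a l k j \<subseteq> Cb a l m (\<lambda>i. j i div 2 ^ (k - m))"
proof
  fix x assume x: "x \<in> Cb a l k j"
  define D :: nat where "D = 2 ^ (k - m)"
  define hm where "hm = l / 2 ^ m"
  have D0: "D > 0" unfolding D_def by simp
  have hm0: "hm > 0" unfolding hm_def using assms by simp
  have p: "(2::real) ^ k = 2 ^ m * 2 ^ (k - m)" using assms by (simp add: power_add[symmetric])
  have hk: "l / 2 ^ k = hm / real D" unfolding hm_def D_def p by simp
  show "x \<in> Cb a l m (\<lambda>i. j i div 2 ^ (k - m))"
    unfolding mem_Cb hm_def[symmetric] D_def[symmetric]
  proof
    fix i
    have xi: "a$i + hm / real D * real (j i) \<le> x$i \<and> x$i \<le> a$i + hm / real D * real (j i) + hm / real D"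
      using x unfolding mem_Cb hk by blast
    have n1: "(j i div D) * D \<le> j i" by (rule div_times_less_eq_dividend)
    have n2: "j i + 1 \<le> (j i div D + 1) * D"
    proof -
      have e: "j i div D * D + j i mod D = j i" by (rule div_mult_mod_eq)
      have "j i mod D < D" using D0 by simp
      moreover have "(j i div D + 1) * D = j i div D * D + D" by simp
      ultimately show ?thesis using e by linarith
    qed
    have r1: "real (j i div D) * real D \<le> real (j i)" using n1 by (metis of_nat_le_iff of_nat_mult)
    have r2: "real (j i) + 1 \<le> (real (j i div D) + 1) * real D" using n2 by (metis of_nat_1 of_nat_add of_nat_le_iff of_nat_mult)
    have l1: "hm * real (j i div D) \<le> hm / real D * real (j i)"
    proof -
      have "real (j i div D) \<le> real (j i) / real D" using r1 D0 by (simp add: field_simps)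
      then have "hm * real (j i div D) \<le> hm * (real (j i) / real D)" using hm0 by (intro mult_left_mono) auto
      then show ?thesis by simp
    qed
    have l2: "hm / real D * real (j i) + hm / real D \<le> hm * real (j i div D) + hm"
    proof -
      have "(real (j i) + 1) / real D \<le> real (j i div D) + 1" using r2 D0 by (simp add: field_simps)
      then have "hm * ((real (j i) + 1) / real D) \<le> hm * (real (j i div D) + 1)" using hm0 by (intro mult_left_mono) auto
      then show ?thesis by (simp add: algebra_simps add_divide_distrib)
    qed
    show "a$i + hm * real (j i div D) \<le> x$i \<and> x$i \<le> a$i + hm * real (j i div D) + hm"
      using xi l1 l2 by linarith
  qed
qed

lemma Cb_0: "Cb a l 0 (\<lambda>_. 0) = cube a l"
proof -
  have "(\<chi> i. real 0) = (0 :: real^'a)" by (simp add: vec_eq_iff)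
  then show ?thesis unfolding Cb_def by simp
qed

lemma Cb_sub_cube:
  assumes "l > 0" "\<forall>i. j i < 2 ^ k"
  shows "Cb a l k j \<subseteq> cube a l"
proof -
  have "Cb a l k j \<subseteq> Cb a l 0 (\<lambda>i. j i div 2 ^ (k - 0))" using Cb_anc[OF _ assms(1)] by blast
  also have "(\<lambda>i. j i div 2 ^ (k - 0)) = (\<lambda>_. 0)" using assms(2) by (simp add: div_eq_0_iff)
  finally show ?thesis unfolding Cb_0 .
qed

lemma dyadic_iff: "dyadic_cubes a l = {Cb a l k j | k j. \<forall>i. j i < 2 ^ k}"
  unfolding dyadic_cubes_def Cb_def by simp

lemma Cb_lmeas: "Cb a l k j \<in> lmeasurable"
  unfolding Cb_def cube_def by simp

locale spd =
  fixes a :: "real^'n" and l :: real and f :: "real^'n \<Rightarrow> real"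
  assumes lpos: "l > 0" and fint: "set_integrable lebesgue (cube a l) f"
begin

definition G :: "real^'n \<Rightarrow> ennreal" where
  "G x = ennreal (indicator (cube a l) x * \<bar>f x\<bar>)"

lemma G_meas[measurable]: "G \<in> borel_measurable lebesgue"
proof -
  have "integrable lebesgue (\<lambda>x. indicator (cube a l) x *\<^sub>R f x)"
    using fint unfolding set_integrable_def .
  then have m: "(\<lambda>x. indicator (cube a l) x *\<^sub>R f x) \<in> borel_measurable lebesgue" by auto
  have "G = (\<lambda>x. ennreal \<bar>indicator (cube a l) x *\<^sub>R f x\<bar>)"
    unfolding G_def by (auto simp: indicator_def fun_eq_iff)
  then show ?thesis using m by simp
qed

lemma nnG:
  assumes A: "A \<in> sets lebesgue" "A \<subseteq> cube a l"
  shows "(\<integral>\<^sup>+x. G x * indicator A x \<partial>lebesgue) = ennreal (LINT y:A|lebesgue. \<bar>f y\<bar>)"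
proof -
  have si: "set_integrable lebesgue A (\<lambda>x. \<bar>f x\<bar>)"
    using set_integrable_abs[OF set_integrable_subset[OF fint A(1) A(2)]] .
  have "(\<integral>\<^sup>+ x. ennreal (\<bar>f x\<bar>) * indicator A x \<partial>lebesgue) = ennreal (set_lebesgue_integral lebesgue A (\<lambda>x. \<bar>f x\<bar>))"
    unfolding set_lebesgue_integral_def nn_integral_set_ennreal using si
    by (subst nn_integral_eq_integral) (simp_all add: mult_ac set_integrable_def)
  moreover have "(\<lambda>x. G x * indicator A x) = (\<lambda>x. ennreal (\<bar>f x\<bar>) * indicator A x)"
    using A(2) unfolding G_def by (auto simp: indicator_def fun_eq_iff)
  ultimately show ?thesis by simp
qed

definition I :: "nat \<Rightarrow> ('n \<Rightarrow> nat) \<Rightarrow> real" where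
  "I k j = (LINT y:Cb a l k j|lebesgue. \<bar>f y\<bar>)"

definition av :: "nat \<Rightarrow> ('n \<Rightarrow> nat) \<Rightarrow> real" where
  "av k j = I k j / measure lebesgue (Cb a l k j)"

lemma mC_pos: "measure lebesgue (Cb a l k j) > 0"
  using Cb_measure[OF lpos, of a k j] lpos by simp

lemma I_nonneg: "I k j \<ge> 0"
  unfolding I_def set_lebesgue_integral_def by (rule Bochner_Integration.integral_nonneg) (auto simp: indicator_def)

lemma av_nonneg: "av k j \<ge> 0"
  unfolding av_def using I_nonneg mC_pos by simp

lemma I_eq: "I k j = av k j * measure lebesgue (Cb a l k j)"
  unfolding av_def using mC_pos[of k j] by simp

lemma nnC:
  assumes "\<forall>i. j i < 2 ^ k"
  shows "(\<integral>\<^sup>+x. G x * indicator (Cb a l k j) x \<partial>lebesgue) = ennreal (I k j)"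
  unfolding I_def using Cb_sub_cube[OF lpos assms] by (intro nnG) auto

lemma nnH:
  assumes "\<forall>i. j i < 2 ^ k"
  shows "(\<integral>\<^sup>+x. G x * indicator (Hb a l k j) x \<partial>lebesgue) = ennreal (I k j)"
proof -
  have "AE x in lebesgue. x \<notin> Cb a l k j - Hb a l k j" using Cb_diff_Hb_null[OF lpos] by (rule AE_not_in)
  then have "(\<integral>\<^sup>+x. G x * indicator (Hb a l k j) x \<partial>lebesgue) = (\<integral>\<^sup>+x. G x * indicator (Cb a l k j) x \<partial>lebesgue)"
    using Hb_sub_Cb[OF lpos, of a k j]
    by (intro nn_integral_cong_AE) (auto elim!: eventually_mono simp: indicator_def)
  then show ?thesis using nnC[OF assms] by simp
qed

lemma emeasure_Hb: "emeasure lebesgue (Hb a l k j) = ennreal (measure lebesgue (Cb a l k j))"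
proof -
  have "Hb a l k j = Cb a l k j - (Cb a l k j - Hb a l k j)" using Hb_sub_Cb[OF lpos] by blast
  then have "emeasure lebesgue (Hb a l k j) = emeasure lebesgue (Cb a l k j)"
    using emeasure_Diff_null_set[OF Cb_diff_Hb_null[OF lpos] Cb_sets] by metis
  also have "\<dots> = ennreal (measure lebesgue (Cb a l k j))" using Cb_lmeas by (rule emeasure_eq_measure2)
  finally show ?thesis .
qed

lemma measure_Hb: "measure lebesgue (Hb a l k j) = measure lebesgue (Cb a l k j)"
  using emeasure_Hb by (simp add: measure_def)

abbreviation pt where "pt \<equiv> ptop av"

definition Ep :: "nat \<Rightarrow> ('n \<Rightarrow> nat) \<Rightarrow> (real^'n) set" where
  "Ep g jP = {x \<in> Hb a l g jP. \<forall>k\<ge>g. pt k (ix a l k x) = (g, jP)}"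

lemma Ep_disj:
  assumes "(g1, j1) \<noteq> (g2, j2)"
  shows "Ep g1 j1 \<inter> Ep g2 j2 = {}"
proof (rule ccontr)
  assume "Ep g1 j1 \<inter> Ep g2 j2 \<noteq> {}"
  then obtain x where x1: "x \<in> Ep g1 j1" and x2: "x \<in> Ep g2 j2" by blast
  have "pt (max g1 g2) (ix a l (max g1 g2) x) = (g1, j1)"
    using x1 max.cobounded1[of g1 g2] unfolding Ep_def by blast
  moreover have "pt (max g1 g2) (ix a l (max g1 g2) x) = (g2, j2)"
    using x2 max.cobounded2[of g2 g1] unfolding Ep_def by blast
  ultimately show False using assms by simp
qed

end

context spd begin

definition HH :: "nat \<times> ('n \<Rightarrow> nat) \<Rightarrow> (real^'n) set" where
  "HH i = Hb a l (fst i) (snd i)"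

definition Ich :: "nat \<Rightarrow> ('n \<Rightarrow> nat) \<Rightarrow> (nat \<times> ('n \<Rightarrow> nat)) set" where
  "Ich g jP = {(k, j). g < k \<and> (\<forall>i. j i < 2 ^ k) \<and> (\<lambda>i. j i div 2 ^ (k - g)) = jP \<and> pt k j \<noteq> (g, jP)
      \<and> (\<forall>m. g \<le> m \<and> m < k \<longrightarrow> pt m (\<lambda>i. j i div 2 ^ (k - m)) = (g, jP))}"

lemma HH_sets[measurable]: "HH i \<in> sets lebesgue"
  unfolding HH_def using Hb_sets[OF lpos] .

lemma Hb_level0:
  assumes "x \<in> Hb a l g jP" "\<forall>i. jP i < 2 ^ g"
  shows "x \<in> Hb a l 0 (\<lambda>_. 0)"
proof -
  have "x \<in> Hb a l 0 (\<lambda>i. jP i div 2 ^ (g - 0))" using Hb_anc[OF lpos assms(1)] by blast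
  moreover have "(\<lambda>i. jP i div 2 ^ (g - 0)) = (\<lambda>_. 0)" using assms(2) by (simp add: div_eq_0_iff)
  ultimately show ?thesis by simp
qed

lemma U_eq:
  assumes bP: "\<forall>i. jP i < 2 ^ g" and pP: "pt g jP = (g, jP)"
  shows "Hb a l g jP - Ep g jP = \<Union>(HH ` Ich g jP)"
proof
  show "Hb a l g jP - Ep g jP \<subseteq> \<Union>(HH ` Ich g jP)"
  proof
    fix x assume x: "x \<in> Hb a l g jP - Ep g jP"
    then have xH: "x \<in> Hb a l g jP" by blast
    have ex: "\<exists>k. g \<le> k \<and> pt k (ix a l k x) \<noteq> (g, jP)" using x unfolding Ep_def by auto
    define k where "k = (LEAST k. g \<le> k \<and> pt k (ix a l k x) \<noteq> (g, jP))"
    have k1: "g \<le> k \<and> pt k (ix a l k x) \<noteq> (g, jP)"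
      unfolding k_def using ex by (rule LeastI_ex)
    have k2: "pt m (ix a l m x) = (g, jP)" if "g \<le> m" "m < k" for m
      using not_less_Least[of m "\<lambda>k. g \<le> k \<and> pt k (ix a l k x) \<noteq> (g, jP)"] that unfolding k_def[symmetric] by blast
    have ixg: "ix a l g x = jP" using xH by (rule ix_Hb)
    have gk: "g < k" using k1 ixg pP by (cases "g = k") auto
    define j where "j = ix a l k x"
    have xk: "x \<in> Hb a l k j" unfolding j_def using Hb_ix[OF lpos xH] k1 by blast
    have bj: "\<forall>i. j i < 2 ^ k" using Hb_bounded[OF lpos xk Hb_level0[OF xH bP]] by blast
    have ixm: "ix a l m x = (\<lambda>i. j i div 2 ^ (k - m))" if "m \<le> k" for m
      using Hb_anc[OF lpos xk that] by (rule ix_Hb)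
    have c3: "(\<lambda>i. j i div 2 ^ (k - g)) = jP" using ixm[of g] ixg gk by simp
    have c4: "pt k j \<noteq> (g, jP)" using k1 unfolding j_def by blast
    have c5: "\<forall>m. g \<le> m \<and> m < k \<longrightarrow> pt m (\<lambda>i. j i div 2 ^ (k - m)) = (g, jP)"
    proof (intro allI impI)
      fix m assume "g \<le> m \<and> m < k"
      then show "pt m (\<lambda>i. j i div 2 ^ (k - m)) = (g, jP)" using k2[of m] ixm[of m] by simp
    qed
    have "(k, j) \<in> Ich g jP"
      unfolding Ich_def using gk bj c3 c4 c5 by blast
    then show "x \<in> \<Union>(HH ` Ich g jP)" using xk unfolding HH_def by force
  qed
next
  show "\<Union>(HH ` Ich g jP) \<subseteq> Hb a l g jP - Ep g jP"
  proof
    fix x assume "x \<in> \<Union>(HH ` Ich g jP)"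
    then obtain k j where kj: "(k, j) \<in> Ich g jP" and x: "x \<in> Hb a l k j" unfolding HH_def by force
    have gk: "g < k" and dj: "(\<lambda>i. j i div 2 ^ (k - g)) = jP" and ne: "pt k j \<noteq> (g, jP)"
      using kj unfolding Ich_def by auto
    have "x \<in> Hb a l g jP" using Hb_anc[OF lpos x, of g] gk dj by simp
    moreover have "x \<notin> Ep g jP"
    proof
      assume "x \<in> Ep g jP"
      then have "pt k (ix a l k x) = (g, jP)" using gk unfolding Ep_def by simp
      then show False using ne ix_Hb[OF x] by simp
    qed
    ultimately show "x \<in> Hb a l g jP - Ep g jP" by blast
  qed
qed

lemma Ich_disj_aux:
  assumes "(k1, j1) \<in> Ich g jP" "(k2, j2) \<in> Ich g jP" "k1 < k2"
    "x \<in> Hb a l k1 j1" "x \<in> Hb a l k2 j2"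
  shows False
proof -
  have "x \<in> Hb a l k1 (\<lambda>i. j2 i div 2 ^ (k2 - k1))" using Hb_anc[OF lpos assms(5)] assms(3) by simp
  then have e: "j1 = (\<lambda>i. j2 i div 2 ^ (k2 - k1))" using Hb_unique assms(4) by blast
  have "pt k1 (\<lambda>i. j2 i div 2 ^ (k2 - k1)) = (g, jP)" using assms(1,2,3) unfolding Ich_def by auto
  moreover have "pt k1 j1 \<noteq> (g, jP)" using assms(1) unfolding Ich_def by auto
  ultimately show False using e by simp
qed

lemma Ich_disj: "disjoint_family_on HH (Ich g jP)"
  unfolding disjoint_family_on_def
proof (intro ballI impI)
  fix i1 i2 assume i: "i1 \<in> Ich g jP" "i2 \<in> Ich g jP" "i1 \<noteq> i2"
  obtain k1 j1 k2 j2 where e: "i1 = (k1, j1)" "i2 = (k2, j2)" by fastforce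
  show "HH i1 \<inter> HH i2 = {}"
  proof (rule ccontr)
    assume "HH i1 \<inter> HH i2 \<noteq> {}"
    then obtain x where x: "x \<in> Hb a l k1 j1" "x \<in> Hb a l k2 j2" unfolding HH_def e by auto
    consider "k1 < k2" | "k2 < k1" | "k1 = k2" by linarith
    then show False
    proof cases
      case 1 then show ?thesis using Ich_disj_aux i x unfolding e by blast
    next
      case 2 then show ?thesis using Ich_disj_aux i x unfolding e by blast
    next
      case 3 then show ?thesis using Hb_unique x i(3) unfolding e by blast
    qed
  qed
qed

lemma Ich_child:
  assumes "(k, j) \<in> Ich g jP"
  shows "av k j > 2 * av g jP"
proof -
  obtain m where km: "k = Suc m" using assms unfolding Ich_def by (cases k) auto
  have gm: "g \<le> m" using assms km unfolding Ich_def by auto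
  have "pt m (\<lambda>i. j i div 2 ^ (k - m)) = (g, jP)" using assms gm km unfolding Ich_def by auto
  then have pm: "pt m (\<lambda>i. j i div 2) = (g, jP)" using km by simp
  have "pt (Suc m) j \<noteq> pt m (\<lambda>i. j i div 2)" using assms km pm unfolding Ich_def by auto
  from ptop_step[OF this] pm km show ?thesis by simp
qed

lemma Ich_bounded: "(k, j) \<in> Ich g jP \<Longrightarrow> \<forall>i. j i < 2 ^ k"
  unfolding Ich_def by auto

lemma Ich_sub:
  assumes "i \<in> Ich g jP" shows "HH i \<subseteq> Hb a l g jP"
proof
  fix x assume x: "x \<in> HH i"
  obtain k j where e: "i = (k, j)" by fastforce
  have gk: "g < k" and dj: "(\<lambda>i. j i div 2 ^ (k - g)) = jP" using assms unfolding e Ich_def by auto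
  have "x \<in> Hb a l k j" using x unfolding e HH_def by simp
  from Hb_anc[OF lpos this, of g] gk dj show "x \<in> Hb a l g jP" by simp
qed

end

context spd begin

lemma U_sets:
  shows "\<Union>(HH ` Ich g jP) \<in> sets lebesgue"
  by (intro sets.countable_UN' countableI_type) auto

lemma Ep_sets:
  assumes bP: "\<forall>i. jP i < 2 ^ g" and pP: "pt g jP = (g, jP)"
  shows "Ep g jP \<in> sets lebesgue"
proof -
  have "Ep g jP = Hb a l g jP - (Hb a l g jP - Ep g jP)" unfolding Ep_def by blast
  then show ?thesis unfolding U_eq[OF bP pP] using U_sets Hb_sets[OF lpos] by (metis sets.Diff)
qed

lemma key_ineq:
  assumes bP: "\<forall>i. jP i < 2 ^ g" and pP: "pt g jP = (g, jP)"
  shows "ennreal (2 * av g jP) * emeasure lebesgue (\<Union>(HH ` Ich g jP)) \<le> ennreal (I g jP)"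
proof -
  define c where "c = 2 * av g jP"
  define U where "U = \<Union>(HH ` Ich g jP)"
  have cI: "countable (Ich g jP)" by (rule countableI_type)
  have US: "U \<in> sets lebesgue" unfolding U_def by (rule U_sets)
  have sub: "U \<subseteq> Hb a l g jP" unfolding U_def using Ich_sub by blast
  have "emeasure (density lebesgue G) U = (\<integral>\<^sup>+i. emeasure (density lebesgue G) (HH i) \<partial>count_space (Ich g jP))"
    unfolding U_def by (rule emeasure_UN_countable) (auto simp: cI Ich_disj)
  also have "\<dots> \<ge> (\<integral>\<^sup>+i. ennreal c * emeasure lebesgue (HH i) \<partial>count_space (Ich g jP))"
  proof (intro nn_integral_mono)
    fix i assume "i \<in> space (count_space (Ich g jP))"
    then have i: "i \<in> Ich g jP" by simp
    obtain k j where e: "i = (k, j)" by fastforce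
    have bj: "\<forall>i. j i < 2 ^ k" using Ich_bounded i e by blast
    have "emeasure (density lebesgue G) (HH i) = (\<integral>\<^sup>+x. G x * indicator (Hb a l k j) x \<partial>lebesgue)"
      unfolding e HH_def by (subst emeasure_density) (auto simp: Hb_sets[OF lpos])
    also have "\<dots> = ennreal (I k j)" using nnH[OF bj] .
    finally have 1: "emeasure (density lebesgue G) (HH i) = ennreal (I k j)" .
    have "c * measure lebesgue (Cb a l k j) \<le> I k j"
      unfolding I_eq c_def using Ich_child[OF i[unfolded e]] mC_pos[of k j]
      by (intro mult_right_mono) auto
    then have "ennreal (c * measure lebesgue (Cb a l k j)) \<le> ennreal (I k j)" by (rule ennreal_leI)
    moreover have "ennreal (c * measure lebesgue (Cb a l k j)) = ennreal c * emeasure lebesgue (HH i)"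
      unfolding e HH_def emeasure_Hb using av_nonneg mC_pos[of k j] c_def
      by (simp add: ennreal_mult)
    ultimately show "ennreal c * emeasure lebesgue (HH i) \<le> emeasure (density lebesgue G) (HH i)"
      unfolding 1 by simp
  qed
  also have "(\<integral>\<^sup>+i. ennreal c * emeasure lebesgue (HH i) \<partial>count_space (Ich g jP))
      = ennreal c * (\<integral>\<^sup>+i. emeasure lebesgue (HH i) \<partial>count_space (Ich g jP))"
    by (rule nn_integral_cmult) auto
  also have "(\<integral>\<^sup>+i. emeasure lebesgue (HH i) \<partial>count_space (Ich g jP)) = emeasure lebesgue U"
    unfolding U_def by (rule emeasure_UN_countable[symmetric]) (auto simp: cI Ich_disj)
  finally have A: "ennreal c * emeasure lebesgue U \<le> emeasure (density lebesgue G) U" .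
  have "emeasure (density lebesgue G) U = (\<integral>\<^sup>+x. G x * indicator U x \<partial>lebesgue)"
    using US by (subst emeasure_density) auto
  also have "\<dots> \<le> (\<integral>\<^sup>+x. G x * indicator (Hb a l g jP) x \<partial>lebesgue)"
    using sub by (intro nn_integral_mono) (auto simp: indicator_def)
  also have "\<dots> = ennreal (I g jP)" using nnH[OF bP] .
  finally show ?thesis using A unfolding c_def U_def by simp
qed

lemma measure_Ep:
  assumes bP: "\<forall>i. jP i < 2 ^ g" and pP: "pt g jP = (g, jP)"
  shows "measure lebesgue (Ep g jP) \<ge> measure lebesgue (Cb a l g jP) / 2"
proof -
  define U where "U = \<Union>(HH ` Ich g jP)"
  define mP where "mP = measure lebesgue (Cb a l g jP)"
  have US: "U \<in> sets lebesgue" unfolding U_def by (rule U_sets)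
  have sub: "U \<subseteq> Hb a l g jP" unfolding U_def using Ich_sub by blast
  have fin: "emeasure lebesgue U \<noteq> top"
  proof -
    have "emeasure lebesgue U \<le> emeasure lebesgue (Hb a l g jP)"
      using sub by (intro emeasure_mono) (auto simp: Hb_sets[OF lpos])
    then show ?thesis unfolding emeasure_Hb by (auto simp: top_unique)
  qed
  have eU: "emeasure lebesgue U = ennreal (measure lebesgue U)" using fin by (rule emeasure_eq_ennreal_measure)
  have mU: "measure lebesgue U \<le> mP / 2"
  proof (cases "av g jP = 0")
    case True
    have "Ich g jP = {}"
    proof (rule ccontr)
      assume "Ich g jP \<noteq> {}"
      then obtain k j where i: "(k, j) \<in> Ich g jP" by auto
      have "I k j > 0" unfolding I_eq using Ich_child[OF i] True mC_pos[of k j] by simp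
      moreover have "ennreal (I k j) \<le> ennreal (I g jP)"
      proof -
        have "ennreal (I k j) = (\<integral>\<^sup>+x. G x * indicator (Hb a l k j) x \<partial>lebesgue)"
          using nnH[OF Ich_bounded[OF i]] by simp
        also have "\<dots> \<le> (\<integral>\<^sup>+x. G x * indicator (Hb a l g jP) x \<partial>lebesgue)"
          using Ich_sub[OF i] unfolding HH_def by (intro nn_integral_mono) (auto simp: indicator_def)
        also have "\<dots> = ennreal (I g jP)" using nnH[OF bP] .
        finally show ?thesis .
      qed
      moreover have "I g jP = 0" unfolding I_eq using True by simp
      ultimately show False by simp
    qed
    then have "U = {}" unfolding U_def by simp
    then show ?thesis unfolding mP_def using mC_pos[of g jP] by simp
  next
    case False
    then have c0: "av g jP > 0" using av_nonneg[of g jP] by simp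
    have "ennreal (2 * av g jP) * ennreal (measure lebesgue U) \<le> ennreal (I g jP)"
      using key_ineq[OF bP pP] unfolding U_def[symmetric] eU .
    then have "ennreal (2 * av g jP * measure lebesgue U) \<le> ennreal (av g jP * mP)"
      unfolding I_eq mP_def using c0 by (simp add: ennreal_mult)
    then have "2 * av g jP * measure lebesgue U \<le> av g jP * mP"
      using c0 mC_pos[of g jP] unfolding mP_def by (subst (asm) ennreal_le_iff) auto
    then show ?thesis using c0 by (simp add: field_simps)
  qed
  have "Ep g jP = Hb a l g jP - U" unfolding U_def U_eq[OF bP pP, symmetric] unfolding Ep_def by blast
  then have "measure lebesgue (Ep g jP) = measure lebesgue (Hb a l g jP) - measure lebesgue U"
    using sub US fin by (simp add: measure_Diff Hb_sets[OF lpos] emeasure_Hb)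
  then show ?thesis using mU measure_Hb unfolding mP_def by simp
qed

lemma Ep_sub: "Ep g jP \<subseteq> Cb a l g jP"
  unfolding Ep_def using Hb_sub_Cb[OF lpos] by blast

end

lemma nn_count_ge:
  assumes "s \<in> S"
  shows "h s \<le> (\<integral>\<^sup>+x. h x \<partial>count_space S)"
proof -
  have "(\<integral>\<^sup>+x. h s * indicator {s} x \<partial>count_space S) \<le> (\<integral>\<^sup>+x. h x \<partial>count_space S)"
    by (intro nn_integral_mono) (auto simp: indicator_def)
  moreover have "(\<integral>\<^sup>+x. h s * indicator {s} x \<partial>count_space S) = h s * emeasure (count_space S) {s}"
    by (rule nn_integral_cmult_indicator) (use assms in auto)
  moreover have "emeasure (count_space S) {s} = 1" using assms by (simp add: emeasure_count_space)
  ultimately show ?thesis by simp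
qed

lemma term_eq:
  assumes "m > 0"
  shows "m powr (\<beta> - 1) * (1 - negpart (ln m)) powr \<alpha> * J = gam \<beta> \<alpha> m * (J / m)"
  using assms unfolding gam_def by (simp add: powr_diff)

lemma rhs_eq:
  assumes "m > 0"
  shows "(1 - negpart (ln m)) powr \<alpha> / m powr ((1 - 1/p) + 1/q) * J = gam (1/p - 1/q) \<alpha> m * (J / m)"
proof -
  define b where "b = 1/p - 1/q"
  have "(1 - 1/p) + 1/q = 1 - b" unfolding b_def by simp
  then have "m powr ((1 - 1/p) + 1/q) = m powr 1 / m powr b" by (simp only: powr_diff)
  also have "\<dots> = m / m powr b" using assms by simp
  finally have "m powr ((1 - 1/p) + 1/q) = m / m powr (1/p - 1/q)" unfolding b_def .
  then show ?thesis using assms unfolding gam_def by simp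
qed

theorem proposition3p3:
  fixes p q \<alpha> l :: real and a :: "real^'n" and f :: "real^'n \<Rightarrow> real"
  assumes "1 \<le> p" "p \<le> q"
    and "p = q \<Longrightarrow> \<alpha> \<le> 0"
    and "l > 0"
    and "set_integrable lebesgue (cube a l) f"
  shows "\<exists>S. sparse a l S \<and>
    (AE x in lebesgue. x \<in> cube a l \<longrightarrow>
       max_op (real CARD('n) * (1/p - 1/q)) \<alpha> a l f x
       \<le> ennreal (sparse_const p q \<alpha>) *
         (\<integral>\<^sup>+ Q. ennreal ((1 - negpart (ln (measure lebesgue Q))) powr \<alpha>
                     / measure lebesgue Q powr ((1 - 1/p) + 1/q)
                     * (LINT y:Q|lebesgue. \<bar>f y\<bar>) * indicator Q x) \<partial>count_space S))"
proof -
  interpret spd a l f using assms(4,5) by unfold_locales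
  define \<beta> where "\<beta> = 1/p - 1/q"
  define PP where "PP = {P. (\<forall>i. snd P i < 2 ^ fst P) \<and> pt (fst P) (snd P) = P}"
  define S where "S = (\<lambda>P. Cb a l (fst P) (snd P)) ` PP"
  define rep where "rep Q = (SOME P. P \<in> PP \<and> Q = Cb a l (fst P) (snd P))" for Q
  define Ef where "Ef Q = Ep (fst (rep Q)) (snd (rep Q))" for Q
  have rep: "rep Q \<in> PP \<and> Q = Cb a l (fst (rep Q)) (snd (rep Q))" if "Q \<in> S" for Q
  proof -
    have "\<exists>P. P \<in> PP \<and> Q = Cb a l (fst P) (snd P)" using that unfolding S_def by blast
    then show ?thesis unfolding rep_def by (rule someI_ex)
  qed
  have PPD: "(\<forall>i. snd P i < 2 ^ fst P) \<and> pt (fst P) (snd P) = (fst P, snd P)" if "P \<in> PP" for P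
    using that unfolding PP_def by simp
  have sp: "sparse a l S"
    unfolding sparse_def
  proof (intro conjI exI[of _ Ef])
    show "countable S" unfolding S_def by (intro countable_image countableI_type)
    show "S \<subseteq> dyadic_cubes a l" unfolding S_def dyadic_iff PP_def by blast
    show "\<forall>Q\<in>S. Ef Q \<in> sets lebesgue \<and> Ef Q \<subseteq> Q \<and> measure lebesgue (Ef Q) \<ge> measure lebesgue Q / 2"
    proof
      fix Q assume Q: "Q \<in> S"
      note r = rep[OF Q]
      note pd = PPD[OF r[THEN conjunct1]]
      show "Ef Q \<in> sets lebesgue \<and> Ef Q \<subseteq> Q \<and> measure lebesgue (Ef Q) \<ge> measure lebesgue Q / 2"
      proof (intro conjI)
        show "Ef Q \<in> sets lebesgue" unfolding Ef_def by (rule Ep_sets[OF pd[THEN conjunct1] pd[THEN conjunct2]])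
        have "Ef Q \<subseteq> Cb a l (fst (rep Q)) (snd (rep Q))" unfolding Ef_def by (rule Ep_sub)
        then show "Ef Q \<subseteq> Q" using r by simp
        have "measure lebesgue (Ef Q) \<ge> measure lebesgue (Cb a l (fst (rep Q)) (snd (rep Q))) / 2"
          unfolding Ef_def by (rule measure_Ep[OF pd[THEN conjunct1] pd[THEN conjunct2]])
        then show "measure lebesgue (Ef Q) \<ge> measure lebesgue Q / 2" using r by simp
      qed
    qed
    show "disjoint_family_on Ef S"
      unfolding disjoint_family_on_def
    proof (intro ballI impI)
      fix Q1 Q2 assume Q: "Q1 \<in> S" "Q2 \<in> S" "Q1 \<noteq> Q2"
      have "rep Q1 \<noteq> rep Q2" using rep[OF Q(1)] rep[OF Q(2)] Q(3) by metis
      then have "(fst (rep Q1), snd (rep Q1)) \<noteq> (fst (rep Q2), snd (rep Q2))" by simp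
      then show "Ef Q1 \<inter> Ef Q2 = {}" unfolding Ef_def by (rule Ep_disj)
    qed
  qed
  define T where "T x Q = ennreal ((1 - negpart (ln (measure lebesgue Q))) powr \<alpha>
                     / measure lebesgue Q powr ((1 - 1/p) + 1/q)
                     * (LINT y:Q|lebesgue. \<bar>f y\<bar>) * indicator Q x)" for x Q
  have sc0: "sparse_const p q \<alpha> \<ge> 0" using sc_ge1[of p q \<alpha>] by simp
  have expo: "real CARD('n) * (1/p - 1/q) / real CARD('n) - 1 = \<beta> - 1"
    unfolding \<beta>_def by simp
  have bound: "max_op (real CARD('n) * (1/p - 1/q)) \<alpha> a l f x
       \<le> ennreal (sparse_const p q \<alpha>) * (\<integral>\<^sup>+ Q. T x Q \<partial>count_space S)" for x
    unfolding max_op_def expo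
  proof (rule SUP_least)
    fix Q assume "Q \<in> {Q \<in> dyadic_cubes a l. x \<in> Q}"
    then obtain k j where bj: "\<forall>i. j i < 2 ^ k" and Qe: "Q = Cb a l k j" and xQ: "x \<in> Q"
      unfolding dyadic_iff by blast
    define g where "g = fst (pt k j)"
    define jP where "jP = snd (pt k j)"
    have anc: "g \<le> k" "jP = (\<lambda>i. j i div 2 ^ (k - g))"
      using ptop_anc[of av k j] unfolding g_def jP_def by auto
    have bP: "\<forall>i. jP i < 2 ^ g"
    proof
      fix i
      have "j i < 2 ^ g * 2 ^ (k - g)" using bj anc(1) by (simp add: power_add[symmetric])
      then show "jP i < 2 ^ g" unfolding anc(2) by (simp add: div_less_iff_less_mult)
    qed
    have pP: "pt g jP = (g, jP)" using ptop_idem[of av k j] unfolding g_def jP_def by simp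
    have "(g, jP) \<in> PP" unfolding PP_def using bP pP by simp
    then have PS: "Cb a l g jP \<in> S" unfolding S_def by (rule rev_image_eqI) simp
    have sub: "Q \<subseteq> Cb a l g jP" unfolding Qe anc(2) using Cb_anc[OF anc(1) lpos] .
    have xP: "x \<in> Cb a l g jP" using sub xQ by blast
    define mQ where "mQ = measure lebesgue Q"
    define mP where "mP = measure lebesgue (Cb a l g jP)"
    have mQ0: "mQ > 0" unfolding mQ_def Qe by (rule mC_pos)
    have mP0: "mP > 0" unfolding mP_def by (rule mC_pos)
    have mQP: "mQ \<le> mP" unfolding mQ_def mP_def using sub
      by (intro measure_mono_fmeasurable) (auto simp: Cb_lmeas Qe)
    have IQ: "(LINT y:Q|lebesgue. \<bar>f y\<bar>) / mQ = av k j" unfolding av_def I_def mQ_def Qe ..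
    have IP: "(LINT y:Cb a l g jP|lebesgue. \<bar>f y\<bar>) / mP = av g jP" unfolding av_def I_def mP_def ..
    have avk: "av k j \<le> 2 * av g jP"
      using ptop_avg[of av k j] av_nonneg unfolding g_def jP_def by blast
    have "measure lebesgue Q powr (\<beta> - 1) * (1 - negpart (ln (measure lebesgue Q))) powr \<alpha>
          * (LINT y:Q|lebesgue. \<bar>f y\<bar>) = gam \<beta> \<alpha> mQ * av k j"
      unfolding mQ_def[symmetric] IQ[symmetric] using mQ0 by (rule term_eq)
    also have "\<dots> \<le> gam \<beta> \<alpha> mQ * (2 * av g jP)"
      using avk gam_nonneg[OF mQ0] by (intro mult_left_mono) auto
    also have "\<dots> \<le> (sparse_const p q \<alpha> / 2 * gam \<beta> \<alpha> mP) * (2 * av g jP)"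
      using gam_ratio[OF assms(1,2,3) mQ0 mQP] av_nonneg[of g jP] unfolding \<beta>_def
      by (intro mult_right_mono) auto
    also have "\<dots> = sparse_const p q \<alpha> * (gam \<beta> \<alpha> mP * av g jP)" by simp
    also have "gam \<beta> \<alpha> mP * av g jP = (1 - negpart (ln mP)) powr \<alpha> / mP powr ((1 - 1/p) + 1/q)
                     * (LINT y:Cb a l g jP|lebesgue. \<bar>f y\<bar>) * indicator (Cb a l g jP) x"
      unfolding IP[symmetric] \<beta>_def using rhs_eq[OF mP0] xP by simp
    finally have le: "measure lebesgue Q powr (\<beta> - 1) * (1 - negpart (ln (measure lebesgue Q))) powr \<alpha>
          * (LINT y:Q|lebesgue. \<bar>f y\<bar>) \<le> sparse_const p q \<alpha> * ((1 - negpart (ln mP)) powr \<alpha> / mP powr ((1 - 1/p) + 1/q)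
                     * (LINT y:Cb a l g jP|lebesgue. \<bar>f y\<bar>) * indicator (Cb a l g jP) x)" .
    have "ennreal (measure lebesgue Q powr (\<beta> - 1) * (1 - negpart (ln (measure lebesgue Q))) powr \<alpha>
          * (LINT y:Q|lebesgue. \<bar>f y\<bar>)) \<le> ennreal (sparse_const p q \<alpha> * ((1 - negpart (ln mP)) powr \<alpha> / mP powr ((1 - 1/p) + 1/q)
                     * (LINT y:Cb a l g jP|lebesgue. \<bar>f y\<bar>) * indicator (Cb a l g jP) x))"
      using le by (rule ennreal_leI)
    also have "\<dots> = ennreal (sparse_const p q \<alpha>) * T x (Cb a l g jP)"
      unfolding T_def mP_def using sc0 by (rule ennreal_mult')
    also have "\<dots> \<le> ennreal (sparse_const p q \<alpha>) * (\<integral>\<^sup>+ Q. T x Q \<partial>count_space S)"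
      using nn_count_ge[OF PS, of "T x"] by (rule mult_left_mono) simp
    finally show "ennreal (measure lebesgue Q powr (\<beta> - 1) * (1 - negpart (ln (measure lebesgue Q))) powr \<alpha>
          * (LINT y:Q|lebesgue. \<bar>f y\<bar>)) \<le> ennreal (sparse_const p q \<alpha>) * (\<integral>\<^sup>+ Q. T x Q \<partial>count_space S)" .
  qed
  show ?thesis
    using sp bound unfolding T_def by (intro exI[of _ S] conjI AE_I2 impI) auto
qed

end
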